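(* Let $n,m,k\ge 1$ and let $S$ be a Boolean $n\times m$ matrix. Let $\bar S$ be the Boolean $(n+2)\times(m+2)$ matrix whose first row is all ones, whose first column is all ones, whose remaining entries in the second row and in the second column are $0$, and whose lower-right $n\times m$ block is $S$ (i.e. $\bar s_{ij}=s_{i-2,j-2}$ for $i,j\ge 3$). Then there exist a Boolean $(n+2)\times(k+2)$ matrix $\bar E$ and a Boolean $(k+2)\times(m+2)$ matrix $\bar P$ with $\bar S=\bar E\cdot\bar P$ if and only if there exist a Boolean $n\times k$ matrix $E$ and a Boolean $k\times m$ matrix $P$ with $S=E\cdot P$.
   Context: All matrices are over the Boolean algebra $(\{0,1\},\vee,\wedge)$. The Boolean matrix product of an $n\times k$ matrix $E=(e_{ia})$ and a $k\times m$ matrix $P=(p_{aj})$ is the $n\times m$ matrix $E\cdot P$ with entries $(E\cdot P)_{ij}=\bigvee_{a=1}^{k}(e_{ia}\wedge p_{aj})$. *)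

theory Defs
  imports Main
begin

text \<open>Boolean matrices are represented as functions nat \<Rightarrow> nat \<Rightarrow> bool, indexed from 0;
  only the entries with row index < number of rows and column index < number of columns
  are meaningful.\<close>

type_synonym bmat = "nat \<Rightarrow> nat \<Rightarrow> bool"

definition bool_mult :: "nat \<Rightarrow> bmat \<Rightarrow> bmat \<Rightarrow> bmat" where
  "bool_mult k E P = (\<lambda>i j. \<exists>a<k. E i a \<and> P a j)"

definition bmat_eq :: "nat \<Rightarrow> nat \<Rightarrow> bmat \<Rightarrow> bmat \<Rightarrow> bool" where
  "bmat_eq n m A B = (\<forall>i<n. \<forall>j<m. A i j = B i j)"

definition bar_mat :: "bmat \<Rightarrow> bmat" where
  "bar_mat S = (\<lambda>i j. if i = 0 \<or> j = 0 then True
                      else if i = 1 \<or> j = 1 then False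
                      else S (i - 2) (j - 2))"

end

theory Submission
  imports Defs
begin

lemma reindex:
  fixes lo hi x k :: nat
  assumes "lo < hi" "hi < k + 2" "x < k + 2" "x \<noteq> lo" "x \<noteq> hi"
  shows "\<exists>c<k. x = (if c < lo then c else if c + 1 < hi then c + 1 else c + 2)"
proof (cases "x < lo")
  case True then show ?thesis using assms by (intro exI[of _ x]) auto
next
  case False
  show ?thesis
  proof (cases "x < hi")
    case True then show ?thesis using assms False by (intro exI[of _ "x - 1"]) auto
  next
    case F2: False then show ?thesis using assms False by (intro exI[of _ "x - 2"]) auto
  qed
qed

theorem lemma2:
  fixes n m k :: nat and S :: bmat
  assumes "n \<ge> 1" and "m \<ge> 1" and "k \<ge> 1"
  shows "(\<exists>Eb Pb :: bmat. bmat_eq (n + 2) (m + 2) (bar_mat S) (bool_mult (k + 2) Eb Pb))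
     \<longleftrightarrow> (\<exists>E P :: bmat. bmat_eq n m S (bool_mult k E P))"
proof
  assume "\<exists>Eb Pb :: bmat. bmat_eq (n + 2) (m + 2) (bar_mat S) (bool_mult (k + 2) Eb Pb)"
  then obtain Eb Pb where HH: "bmat_eq (n + 2) (m + 2) (bar_mat S) (bool_mult (k + 2) Eb Pb)" by blast
  have H: "bar_mat S i j = (\<exists>a<k+2. Eb i a \<and> Pb a j)" if "i < n+2" "j < m+2" for i j
    using HH that unfolding bmat_eq_def bool_mult_def by blast
  have "bar_mat S 1 0" by (simp add: bar_mat_def)
  then obtain a where a: "a < k+2" "Eb 1 a" "Pb a 0" using H[of 1 0] by auto
  have pa: "\<not> Pb a j" if "1 \<le> j" "j < m+2" for j
    using H[of 1 j] a that by (auto simp: bar_mat_def)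
  have "bar_mat S 0 1" by (simp add: bar_mat_def)
  then obtain b where b: "b < k+2" "Eb 0 b" "Pb b 1" using H[of 0 1] by auto
  have eb: "\<not> Eb i b" if "1 \<le> i" "i < n+2" for i
    using H[of i 1] b that by (auto simp: bar_mat_def)
  have ab: "a \<noteq> b" using pa[of 1] b by auto
  define lo where "lo = min a b"
  define hi where "hi = max a b"
  have lohi: "lo < hi" "hi < k+2" using ab a b unfolding lo_def hi_def by auto
  define g where "g = (\<lambda>c::nat. if c < lo then c else if c + 1 < hi then c + 1 else c + 2)"
  have gk: "g c < k + 2" if "c < k" for c using that unfolding g_def by auto
  define E where "E = (\<lambda>i c. Eb (i+2) (g c))"
  define P where "P = (\<lambda>c j. Pb (g c) (j+2))"
  have "bmat_eq n m S (bool_mult k E P)"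
    unfolding bmat_eq_def bool_mult_def
  proof (intro allI impI)
    fix i j assume ij: "i < n" "j < m"
    have eq: "S i j = (\<exists>x<k+2. Eb (i+2) x \<and> Pb x (j+2))"
      using H[of "i+2" "j+2"] ij by (simp add: bar_mat_def)
    show "S i j = (\<exists>c<k. E i c \<and> P c j)"
    proof
      assume "S i j"
      then obtain x where x: "x<k+2" "Eb (i+2) x" "Pb x (j+2)" using eq by auto
      have "x \<noteq> a" using pa[of "j+2"] x ij by auto
      moreover have "x \<noteq> b" using eb[of "i+2"] x ij by auto
      ultimately have "x \<noteq> lo" "x \<noteq> hi" unfolding lo_def hi_def by auto
      then obtain c where "c < k" "x = g c" using reindex[OF lohi x(1)] unfolding g_def by blast
      then show "\<exists>c<k. E i c \<and> P c j" using x unfolding E_def P_def by blast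
    next
      assume "\<exists>c<k. E i c \<and> P c j"
      then show "S i j" using eq gk unfolding E_def P_def by blast
    qed
  qed
  then show "\<exists>E P :: bmat. bmat_eq n m S (bool_mult k E P)" by blast
next
  assume "\<exists>E P :: bmat. bmat_eq n m S (bool_mult k E P)"
  then obtain E P where HH: "bmat_eq n m S (bool_mult k E P)" by blast
  have H: "S i j = (\<exists>a<k. E i a \<and> P a j)" if "i < n" "j < m" for i j
    using HH that unfolding bmat_eq_def bool_mult_def by blast
  define Eb where "Eb = (\<lambda>i a. if a = 0 then i = 0 else if a = 1 then True
                        else 2 \<le> i \<and> E (i-2) (a-2))"
  define Pb where "Pb = (\<lambda>a j. if a = 0 then True else if a = 1 then j = 0
                        else 2 \<le> j \<and> P (a-2) (j-2))"
  have E0: "Eb i 0 = (i = 0)" and E1: "Eb i 1" for i by (simp_all add: Eb_def)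
  have P0: "Pb 0 j" and P1: "Pb 1 j = (j = 0)" for j by (simp_all add: Pb_def)
  have E2: "Eb i a = (2 \<le> i \<and> E (i-2) (a-2))" if "2 \<le> a" for i a
    using that by (simp add: Eb_def)
  have P2: "Pb a j = (2 \<le> j \<and> P (a-2) (j-2))" if "2 \<le> a" for a j
    using that by (simp add: Pb_def)
  have "bmat_eq (n + 2) (m + 2) (bar_mat S) (bool_mult (k + 2) Eb Pb)"
    unfolding bmat_eq_def bool_mult_def
  proof (intro allI impI)
    fix i j assume ij: "i < n+2" "j < m+2"
    show "bar_mat S i j = (\<exists>a<k+2. Eb i a \<and> Pb a j)"
    proof (cases "i = 0 \<or> j = 0")
      case True
      then have "bar_mat S i j" by (simp add: bar_mat_def)
      moreover have "\<exists>a<k+2. Eb i a \<and> Pb a j"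
        using True
      proof
        assume "i = 0" then show ?thesis using E0 P0 by (intro exI[of _ 0]) simp
      next
        assume "j = 0" then show ?thesis using E1 P1 by (intro exI[of _ 1]) simp
      qed
      ultimately show ?thesis by blast
    next
      case F: False
      show ?thesis
      proof (cases "i = 1 \<or> j = 1")
        case True
        then have "\<not> bar_mat S i j" using F unfolding bar_mat_def by presburger
        moreover have "\<not> Eb i a \<or> \<not> Pb a j" for a
        proof (cases "a \<ge> 2")
          case True
          have "\<not> 2 \<le> i \<or> \<not> 2 \<le> j" using \<open>i = 1 \<or> j = 1\<close> by linarith
          then show ?thesis unfolding E2[OF True, of i] P2[OF True, of j] by blast
        next
          case False
          then have "a = 0 \<or> a = 1" by linarith
          moreover have "i \<noteq> 0" "j \<noteq> 0" using F by simp_all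
          ultimately show ?thesis using E0[of i] P1[of j] by blast
        qed
        ultimately show ?thesis by blast
      next
        case False
        with F have i2: "2 \<le> i" "2 \<le> j" by auto
        have bm: "bar_mat S i j = S (i-2) (j-2)" using F False by (simp add: bar_mat_def)
        have "S (i-2) (j-2) = (\<exists>a<k. E (i-2) a \<and> P a (j-2))" using H ij i2 by simp
        also have "\<dots> = (\<exists>a<k+2. Eb i a \<and> Pb a j)"
        proof
          assume "\<exists>a<k. E (i-2) a \<and> P a (j-2)"
          then obtain a where a: "a<k" "E (i-2) a" "P a (j-2)" by blast
          have "Eb i (a+2)" using E2[of "a+2" i] a i2 by simp
          moreover have "Pb (a+2) j" using P2[of "a+2" j] a i2 by simp
          ultimately show "\<exists>a<k+2. Eb i a \<and> Pb a j" using a(1) by (intro exI[of _ "a+2"]) simp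
        next
          assume "\<exists>a<k+2. Eb i a \<and> Pb a j"
          then obtain a where a: "a<k+2" "Eb i a" "Pb a j" by blast
          have "a \<noteq> 0"
          proof
            assume "a = 0"
            with a(2) have "Eb i 0" by simp
            with E0[of i] F show False by simp
          qed
          moreover have "a \<noteq> 1"
          proof
            assume "a = 1"
            with a(3) have "Pb 1 j" by simp
            with P1[of j] F show False by simp
          qed
          ultimately have a2: "a \<ge> 2" by linarith
          have "E (i-2) (a-2)" using a(2) E2[OF a2, of i] by simp
          moreover have "P (a-2) (j-2)" using a(3) P2[OF a2, of j] by simp
          ultimately have "E (i-2) (a-2)" "P (a-2) (j-2)" by simp_all
          then show "\<exists>a<k. E (i-2) a \<and> P a (j-2)" using a(1) a2
            by (intro exI[of _ "a-2"]) simp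
        qed
        finally show ?thesis using bm by simp
      qed
    qed
  qed
  then show "\<exists>Eb Pb :: bmat. bmat_eq (n + 2) (m + 2) (bar_mat S) (bool_mult (k + 2) Eb Pb)"
    by (intro exI)
qed

end
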